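(* Let $\mu$ be a positive Radon measure on $\mathbb{R}_+=[0,\infty)$ having finite moments of all orders (i.e. $\int_{\mathbb{R}_+} t^n\,d\mu(t)<\infty$ for all $n\in\mathbb{N}$) and satisfying $\mu\big(\mathbb{R}_+\setminus[0,s_\mu)\big)=0$, where $s_\mu:=\sup\{x: x\in\mathrm{supp}(\mu)\}\in[0,\infty]$. Let $\mathcal{W}=\{w_n\}_{n=0}^\infty$ be a sequence in a real Hilbert space $\mathscr{K}$ and assume there is a constant $C>0$ such that \[ \Big\|\sum_{n=0}^\infty a_n w_n\Big\|_{\mathscr{K}}\le C\Big\|\sum_{n=0}^\infty a_n t^n\Big\|_{L^2(\mu)} \] for all finitely supported sequences $\{a_n\}_{n=0}^\infty$ of non-negative real numbers. Let $\mathscr{H}$ be a real Hilbert space, $\{\lambda_n\}_{n=0}^\infty$ a sequence of positive numbers, and $\mathcal{V}=\{v_n\}_{n=0}^\infty\subset\mathscr{H}$ a sequence satisfying \[ \langle \lambda_n v_n,\lambda_m v_m\rangle_{\mathscr{H}}=\int_{\mathbb{R}_+} t^{m+n}\,d\mu(t)+\langle w_n,w_m\rangle_{\mathscr{K}}\quad\text{for all } n,m\in\mathbb{N}. \] Then $\overline{\mathcal{C}}[\mathcal{V}]=\mathcal{C}[[\mathcal{V}]]$; in particular $\mathcal{C}[[\mathcal{V}]]$ is a closed convex cone in $\mathscr{H}$.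
   Context: $\mathbb{N}=\{0,1,2,\dots\}$. For a sequence $\mathcal{V}=\{v_n\}_{n=0}^\infty$ in a real Hilbert space $\mathscr{H}$: $\mathcal{C}[\mathcal{V}]=\{\sum_{n=0}^N a_n v_n : N\in\mathbb{N},\ a_n\ge 0\}$ is the convex cone generated by $\mathcal{V}$, $\overline{\mathcal{C}}[\mathcal{V}]$ is its norm closure in $\mathscr{H}$, and $\mathcal{C}[[\mathcal{V}]]=\{\sum_{n=0}^\infty a_n v_n : a_n\ge 0,\ \text{the series converges in }\mathscr{H}\}$, where convergence means convergence of the partial sums $\sum_{n=0}^N a_nv_n$ as $N\to\infty$. *)

theory Defs
  imports "HOL-Analysis.Analysis" "HOL-Probability.Probability"
begin

definition measure_support :: "real measure \<Rightarrow> real set" where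
  "measure_support M = {x. \<forall>U. open U \<and> x \<in> U \<longrightarrow> emeasure M U > 0}"

definition supp_sup :: "real measure \<Rightarrow> ereal" where
  "supp_sup M = Sup (ereal ` measure_support M)"

definition cone_gen :: "(nat \<Rightarrow> 'a::real_vector) \<Rightarrow> 'a set" where
  "cone_gen V = {(\<Sum>n\<le>N. a n *\<^sub>R V n) | N a. \<forall>n. a n \<ge> 0}"

definition series_cone :: "(nat \<Rightarrow> 'a::real_normed_vector) \<Rightarrow> 'a set" where
  "series_cone V = {x. \<exists>a. (\<forall>n. a n \<ge> 0) \<and> (\<lambda>N. \<Sum>n\<le>N. a n *\<^sub>R V n) \<longlonglongrightarrow> x}"

end

theory Submission
  imports Defs
begin


locale cone_setting =
  fixes M :: "real measure" and w :: "nat \<Rightarrow> 'k::real_inner"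
    and u :: "nat \<Rightarrow> 'h::real_inner" and C :: real
  assumes sets_M: "sets M = sets borel"
    and nonneg_supp: "emeasure M {..<0} = 0"
    and moments: "\<And>n. integrable M (\<lambda>t. t ^ n)"
    and supp_cond: "emeasure M ({0..} - {x. ereal x < supp_sup M}) = 0"
    and C_pos: "C > 0"
    and bound: "\<And>N (a :: nat \<Rightarrow> real). (\<forall>n. a n \<ge> 0) \<Longrightarrow>
        norm (\<Sum>n\<le>N. a n *\<^sub>R w n)
          \<le> C * sqrt (integral\<^sup>L M (\<lambda>t. (\<Sum>n\<le>N. a n * t ^ n)\<^sup>2))"
    and gram: "\<And>n m. u n \<bullet> u m = integral\<^sup>L M (\<lambda>t. t ^ (m + n)) + w n \<bullet> w m"
begin

lemma space_M: "space M = UNIV"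
  using sets_eq_imp_space_eq[OF sets_M] by simp

lemma meas_eq: "borel_measurable M = borel_measurable borel"
  by (rule measurable_cong_sets[OF sets_M refl])

lemma sets_M_iff: "A \<in> sets M \<longleftrightarrow> A \<in> sets borel"
  using sets_M by simp

lemma int_poly: "integrable M (\<lambda>t. \<Sum>n\<in>S. c n * t ^ n)"
  by (rule Bochner_Integration.integrable_sum) (simp add: moments)

lemma sq_expand: "(\<Sum>n\<in>S. c n * (t::real) ^ n)\<^sup>2 = (\<Sum>n\<in>S. \<Sum>m\<in>S. (c n * c m) * t ^ (m + n))"
  by (simp add: power2_eq_square sum_product power_add algebra_simps)

lemma int_sq: "integrable M (\<lambda>t. (\<Sum>n\<in>S. c n * t ^ n)\<^sup>2)"
  unfolding sq_expand by (intro Bochner_Integration.integrable_sum) (simp add: moments)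

lemma integral_sq: "finite S \<Longrightarrow> integral\<^sup>L M (\<lambda>t. (\<Sum>n\<in>S. c n * t ^ n)\<^sup>2)
   = (\<Sum>n\<in>S. \<Sum>m\<in>S. (c n * c m) * integral\<^sup>L M (\<lambda>t. t ^ (m + n)))"
  unfolding sq_expand
  by (simp add: integral_sum moments)

lemma norm_sq: "finite S \<Longrightarrow> (norm (\<Sum>n\<in>S. c n *\<^sub>R u n))\<^sup>2
   = integral\<^sup>L M (\<lambda>t. (\<Sum>n\<in>S. c n * t ^ n)\<^sup>2) + (norm (\<Sum>n\<in>S. c n *\<^sub>R w n))\<^sup>2"
  unfolding power2_norm_eq_inner integral_sq[symmetric]
  by (simp add: integral_sq inner_sum_left inner_sum_right gram algebra_simps sum.distrib sum_distrib_left)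

lemma bound_S:
  assumes "finite S" "\<And>n. n \<in> S \<Longrightarrow> c n \<ge> 0"
  shows "norm (\<Sum>n\<in>S. c n *\<^sub>R w n) \<le> C * sqrt (integral\<^sup>L M (\<lambda>t. (\<Sum>n\<in>S. c n * t ^ n)\<^sup>2))"
proof -
  define N where "N = Max (insert 0 S)"
  have sub: "S \<subseteq> {..N}" using assms(1) by (auto simp: N_def)
  define a where "a n = (if n \<in> S then c n else 0)" for n
  have a0: "\<forall>n. a n \<ge> 0" using assms(2) by (auto simp: a_def)
  have e1: "(\<Sum>n\<le>N. a n *\<^sub>R w n) = (\<Sum>n\<in>S. c n *\<^sub>R w n)"
    unfolding a_def by (rule sum.mono_neutral_cong_right) (use sub in auto)
  have e2: "(\<Sum>n\<le>N. a n * t ^ n) = (\<Sum>n\<in>S. c n * t ^ n)" for t :: real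
    unfolding a_def by (rule sum.mono_neutral_cong_right) (use sub in auto)
  show ?thesis using bound[OF a0, of N] unfolding e1 e2 .
qed

lemma norm_upper:
  assumes "finite S" "\<And>n. n \<in> S \<Longrightarrow> c n \<ge> 0"
  shows "(norm (\<Sum>n\<in>S. c n *\<^sub>R u n))\<^sup>2 \<le> (1 + C\<^sup>2) * integral\<^sup>L M (\<lambda>t. (\<Sum>n\<in>S. c n * t ^ n)\<^sup>2)"
proof -
  have I0: "integral\<^sup>L M (\<lambda>t. (\<Sum>n\<in>S. c n * t ^ n)\<^sup>2) \<ge> 0" by simp
  have "(norm (\<Sum>n\<in>S. c n *\<^sub>R w n))\<^sup>2 \<le> (C * sqrt (integral\<^sup>L M (\<lambda>t. (\<Sum>n\<in>S. c n * t ^ n)\<^sup>2)))\<^sup>2"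
    by (rule power_mono[OF bound_S[OF assms]]) (use assms in auto)
  also have "\<dots> = C\<^sup>2 * integral\<^sup>L M (\<lambda>t. (\<Sum>n\<in>S. c n * t ^ n)\<^sup>2)"
    using I0 by (simp add: power_mult_distrib)
  finally show ?thesis using norm_sq[OF assms(1), of c] by (simp add: algebra_simps)
qed

lemma norm_lower:
  assumes "finite S"
  shows "integral\<^sup>L M (\<lambda>t. (\<Sum>n\<in>S. c n * t ^ n)\<^sup>2) \<le> (norm (\<Sum>n\<in>S. c n *\<^sub>R u n))\<^sup>2"
  using norm_sq[OF assms, of c] by simp

end

context cone_setting begin

lemma fin: "finite_measure M"
  using moments[of 0] by (intro finite_measureI) (simp add: integrable_iff_bounded)

lemma AE_good: "AE t in M. 0 \<le> t \<and> ereal t < supp_sup M"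
proof (rule AE_I')
  let ?N = "{..<0::real} \<union> ({0..} - {x. ereal x < supp_sup M})"
  have m1: "{..<0::real} \<in> sets M" by (simp add: sets_M_iff)
  have m2: "{x::real. ereal x < supp_sup M} \<in> sets M" unfolding sets_M_iff by measurable
  have m3: "({0::real..} - {x. ereal x < supp_sup M}) \<in> sets M"
    using m2 by (intro sets.Diff) (auto simp: sets_M_iff)
  show "?N \<in> null_sets M"
    using m1 m3 nonneg_supp supp_cond by (intro null_sets.Un) (auto simp: null_sets_def)
  show "{x \<in> space M. \<not> (0 \<le> x \<and> ereal x < supp_sup M)} \<subseteq> ?N" by auto
qed

lemma pos_tail:
  assumes "ereal t1 < supp_sup M"
  shows "measure M {t1<..} > 0"
proof -
  obtain y where y: "y \<in> measure_support M" "ereal t1 < ereal y"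
    using assms unfolding supp_sup_def less_Sup_iff by auto
  hence "emeasure M {t1<..} > 0"
    unfolding measure_support_def by auto
  moreover have "emeasure M {t1<..} < \<infinity>"
    using finite_measure.emeasure_finite[OF fin] by (simp add: top.not_eq_extremum)
  ultimately show ?thesis
    using finite_measure.emeasure_eq_measure[OF fin] by simp
qed

lemma mom2_nonneg: "integral\<^sup>L M (\<lambda>t. (t ^ n)\<^sup>2) \<ge> 0" by simp

lemma u_zero:
  assumes "integral\<^sup>L M (\<lambda>t. (t ^ n)\<^sup>2) = 0"
  shows "u n = 0"
proof -
  have "(norm (\<Sum>m\<in>{n}. 1 *\<^sub>R u m))\<^sup>2 \<le> (1 + C\<^sup>2) * integral\<^sup>L M (\<lambda>t. (\<Sum>m\<in>{n}. 1 * t ^ m)\<^sup>2)"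
    by (rule norm_upper) auto
  thus ?thesis using assms by simp
qed

lemma degenerate:
  assumes "supp_sup M \<le> 0"
  shows "u n = 0"
proof -
  have "AE t in M. False" using AE_good
  proof eventually_elim
    case (elim t)
    hence "ereal t < ereal 0" using assms by (metis order_less_le_trans zero_ereal_def)
    thus ?case using elim by simp
  qed
  hence "AE t in M. (t ^ n)\<^sup>2 = (0::real)" by eventually_elim auto
  hence "integral\<^sup>L M (\<lambda>t. (t ^ n)\<^sup>2) = integral\<^sup>L M (\<lambda>t. 0::real)"
    by (intro integral_cong_AE) (auto simp: meas_eq)
  thus ?thesis by (intro u_zero) simp
qed

lemma tail_small:
  fixes g :: "real \<Rightarrow> real"
  assumes g: "integrable M g" and spos: "supp_sup M > 0" and e: "e > 0"
  shows "\<exists>t1\<ge>0. ereal t1 < supp_sup M \<and> integral\<^sup>L M (\<lambda>t. g t * indicator {t1<..} t) \<le> e"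
proof -
  have "\<exists>\<tau>::nat\<Rightarrow>real. (\<forall>j. \<tau> j \<ge> 0 \<and> ereal (\<tau> j) < supp_sup M) \<and>
     (\<forall>t. ereal t < supp_sup M \<longrightarrow> eventually (\<lambda>j. t \<le> \<tau> j) sequentially)"
  proof (cases "supp_sup M")
    case (real r)
    with spos have r: "r > 0" by simp
    define \<tau> where "\<tau> j = r - r / real (Suc j)" for j
    have lim: "\<tau> \<longlonglongrightarrow> r - 0" unfolding \<tau>_def
      by (intro tendsto_diff tendsto_const LIMSEQ_Suc[OF lim_const_over_n])
    show ?thesis
    proof (intro exI conjI allI impI)
      fix j show "\<tau> j \<ge> 0" using r by (simp add: \<tau>_def field_simps)
      show "ereal (\<tau> j) < supp_sup M" using r by (simp add: \<tau>_def real)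
    next
      fix t assume "ereal t < supp_sup M"
      hence "t < r - 0" by (simp add: real)
      from order_tendstoD(1)[OF lim this] show "eventually (\<lambda>j. t \<le> \<tau> j) sequentially"
        by eventually_elim simp
    qed
  next
    case PInf
    show ?thesis
    proof (intro exI[of _ "\<lambda>j. real j"] conjI allI impI)
      fix t :: real
      obtain n :: nat where "t \<le> real n" using real_arch_simple by blast
      thus "eventually (\<lambda>j. t \<le> real j) sequentially"
        unfolding eventually_sequentially by (meson of_nat_le_iff order_trans)
    qed (auto simp: PInf)
  next
    case MInf with spos show ?thesis by simp
  qed
  then obtain \<tau> :: "nat \<Rightarrow> real" where \<tau>: "\<And>j. \<tau> j \<ge> 0" "\<And>j. ereal (\<tau> j) < supp_sup M"
    and ev: "\<And>t. ereal t < supp_sup M \<Longrightarrow> eventually (\<lambda>j. t \<le> \<tau> j) sequentially" by blast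
  have gm: "g \<in> borel_measurable M" using g by auto
  have "(\<lambda>j. integral\<^sup>L M (\<lambda>t. g t * indicator {\<tau> j<..} t)) \<longlonglongrightarrow> integral\<^sup>L M (\<lambda>t. 0::real)"
  proof (rule integral_dominated_convergence[where w="\<lambda>t. norm (g t)"])
    show "(\<lambda>t. 0::real) \<in> borel_measurable M" by simp
    show "(\<lambda>t. g t * indicator {\<tau> j<..} t) \<in> borel_measurable M" for j
      using gm by (intro borel_measurable_times gm) (simp_all add: meas_eq)
    show "integrable M (\<lambda>t. norm (g t))" using g by auto
    show "AE t in M. (\<lambda>j. g t * indicator {\<tau> j<..} t) \<longlonglongrightarrow> 0" using AE_good
    proof eventually_elim
      case (elim t)
      hence "eventually (\<lambda>j. g t * indicator {\<tau> j<..} t = 0) sequentially"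
      proof -
        have "eventually (\<lambda>j. t \<le> \<tau> j) sequentially" using ev[of t] elim by simp
        thus ?thesis by (rule eventually_mono) (simp add: indicator_def)
      qed
      thus ?case by (rule tendsto_eventually)
    qed
    show "AE t in M. norm (g t * indicator {\<tau> j<..} t) \<le> norm (g t)" for j
      by (auto simp: indicator_def)
  qed
  hence "(\<lambda>j. integral\<^sup>L M (\<lambda>t. g t * indicator {\<tau> j<..} t)) \<longlonglongrightarrow> 0" by simp
  from order_tendstoD(2)[OF this e] obtain j where
    "integral\<^sup>L M (\<lambda>t. g t * indicator {\<tau> j<..} t) < e"
    using eventually_sequentially by auto
  thus ?thesis using \<tau> by (intro exI[of _ "\<tau> j"]) auto
qed

end

context cone_setting begin

lemma sum_split_ivl: "(N::nat) \<le> L \<Longrightarrow> (\<Sum>n\<le>L. f n) = (\<Sum>n\<le>N. f n) + (\<Sum>n\<in>{N<..L}. f n)"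
proof -
  assume "N \<le> L"
  hence "{..L} = {..N} \<union> {N<..L}" by auto
  thus ?thesis by (simp add: sum.union_disjoint ivl_disj_int)
qed

lemma core:
  fixes b :: "nat \<Rightarrow> nat \<Rightarrow> real" and NN :: "nat \<Rightarrow> nat" and X :: "nat \<Rightarrow> 'h" and a :: "nat \<Rightarrow> real"
  assumes spos: "supp_sup M > 0"
    and b_nn: "\<And>k n. b k n \<ge> 0"
    and b_out: "\<And>k n. NN k < n \<Longrightarrow> b k n = 0"
    and X_eq: "\<And>k. X k = (\<Sum>n\<le>NN k. b k n *\<^sub>R u n)"
    and X_lim: "X \<longlonglongrightarrow> x"
    and b_lim: "\<And>n. (\<lambda>k. b k n) \<longlonglongrightarrow> a n"
  shows "(\<lambda>N. \<Sum>n\<le>N. a n *\<^sub>R u n) \<longlonglongrightarrow> x"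
proof -
  define p where "p k t = (\<Sum>n\<le>NN k. b k n * t ^ n)" for k t
  have a_nn: "a n \<ge> 0" for n by (rule LIMSEQ_le_const[OF b_lim]) (simp add: b_nn)
  have X_L: "NN k \<le> L \<Longrightarrow> X k = (\<Sum>n\<le>L. b k n *\<^sub>R u n)" for k L
    unfolding X_eq by (rule sum.mono_neutral_left) (auto simp: b_out)
  have p_L: "NN k \<le> L \<Longrightarrow> p k t = (\<Sum>n\<le>L. b k n * t ^ n)" for k L t
    unfolding p_def by (rule sum.mono_neutral_left) (auto simp: b_out)
  have p_nn: "0 \<le> t \<Longrightarrow> 0 \<le> p k t" for k t
    unfolding p_def by (intro sum_nonneg) (simp add: b_nn)
  have p_mono: "0 \<le> s \<Longrightarrow> s \<le> t \<Longrightarrow> p k s \<le> p k t" for k s t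
    unfolding p_def by (intro sum_mono mult_left_mono power_mono) (auto simp: b_nn)
  have p_int: "integrable M (\<lambda>t. (p k t)\<^sup>2)" for k unfolding p_def by (rule int_sq)
  have "Bseq X" using X_lim by (intro convergent_imp_Bseq convergentI)
  then obtain B where B0: "B > 0" and B: "\<And>k. norm (X k) \<le> B" by (auto elim: BseqE)
  have pB: "integral\<^sup>L M (\<lambda>t. (p k t)\<^sup>2) \<le> B\<^sup>2" for k
  proof -
    have "integral\<^sup>L M (\<lambda>t. (p k t)\<^sup>2) \<le> (norm (X k))\<^sup>2"
      unfolding p_def X_eq by (rule norm_lower) simp
    also have "\<dots> \<le> B\<^sup>2" using B[of k] by (intro power_mono) auto
    finally show ?thesis .
  qed
  have pdiff_eq: "p k t - p j t = (\<Sum>n\<le>max (NN k) (NN j). (b k n - b j n) * t ^ n)" for k j t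
    using p_L[of k "max (NN k) (NN j)" t] p_L[of j "max (NN k) (NN j)" t]
    by (simp add: sum_subtractf left_diff_distrib)
  have Xdiff_eq: "X k - X j = (\<Sum>n\<le>max (NN k) (NN j). (b k n - b j n) *\<^sub>R u n)" for k j
    using X_L[of k "max (NN k) (NN j)"] X_L[of j "max (NN k) (NN j)"]
    by (simp add: sum_subtractf scaleR_left_diff_distrib)
  have pdiff_int: "integrable M (\<lambda>t. (p k t - p j t)\<^sup>2)" for k j
    unfolding pdiff_eq by (rule int_sq)
  have pdiff: "integral\<^sup>L M (\<lambda>t. (p k t - p j t)\<^sup>2) \<le> (norm (X k - X j))\<^sup>2" for k j
    unfolding pdiff_eq Xdiff_eq by (rule norm_lower) simp
  show ?thesis
    unfolding tendsto_iff
  proof (intro allI impI)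
    fix \<epsilon> :: real assume \<epsilon>: "\<epsilon> > 0"
    define D where "D = sqrt (5 * (1 + C\<^sup>2))"
    have D0: "D \<ge> 0" by (simp add: D_def)
    define \<delta> where "\<delta> = \<epsilon> / (3 + D)"
    have \<delta>0: "\<delta> > 0" using \<epsilon> D0 by (simp add: \<delta>_def)
    have h\<epsilon>: "(2 + D) * \<delta> < \<epsilon>"
    proof -
      have "(3 + D) * \<delta> = \<epsilon>" using D0 by (simp add: \<delta>_def)
      thus ?thesis using \<delta>0 by (simp add: algebra_simps)
    qed
    obtain K0 where K0: "\<And>k j. K0 \<le> k \<Longrightarrow> K0 \<le> j \<Longrightarrow> dist (X k) (X j) < \<delta>"
      using LIMSEQ_imp_Cauchy[OF X_lim] \<delta>0 unfolding Cauchy_def by blast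
    have dd: "\<delta>\<^sup>2 > 0" using \<delta>0 by simp
    obtain t1 where t1: "t1 \<ge> 0" "ereal t1 < supp_sup M"
      and t1i: "integral\<^sup>L M (\<lambda>t. (p K0 t)\<^sup>2 * indicator {t1<..} t) \<le> \<delta>\<^sup>2"
      using tail_small[OF p_int spos dd] by blast
    obtain t2 where t12: "ereal t1 < ereal t2" and t2: "ereal t2 < supp_sup M"
      using ereal_dense2[OF t1(2)] by blast
    have t12r: "t1 < t2" using t12 by simp
    define m2 where "m2 = measure M {t2<..}"
    have m2: "m2 > 0" unfolding m2_def by (rule pos_tail[OF t2])
    have ind_int: "integrable M (indicator A :: real \<Rightarrow> real)" if "A \<in> sets borel" for A
      using that finite_measure.emeasure_finite[OF fin, of A]
      by (intro integrable_real_indicator) (auto simp: sets_M_iff top.not_eq_extremum)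
    have pt2: "(p k t2)\<^sup>2 \<le> B\<^sup>2 / m2" for k
    proof -
      have "integral\<^sup>L M (\<lambda>t. (p k t2)\<^sup>2 * indicator {t2<..} t) \<le> integral\<^sup>L M (\<lambda>t. (p k t)\<^sup>2)"
      proof (rule integral_mono_AE)
        show "integrable M (\<lambda>t. (p k t2)\<^sup>2 * indicator {t2<..} t)"
          using ind_int[of "{t2<..}"] by simp
        show "integrable M (\<lambda>t. (p k t)\<^sup>2)" by (rule p_int)
        show "AE t in M. (p k t2)\<^sup>2 * indicator {t2<..} t \<le> (p k t)\<^sup>2" using AE_good
        proof eventually_elim
          case (elim t)
          show ?case
          proof (cases "t2 < t")
            case True
            have "0 \<le> p k t2" "p k t2 \<le> p k t" using True t1 t12r by (auto intro!: p_nn p_mono)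
            thus ?thesis using True by (simp add: power_mono)
          qed simp
        qed
      qed
      also have "\<dots> \<le> B\<^sup>2" by (rule pB)
      finally have "(p k t2)\<^sup>2 * m2 \<le> B\<^sup>2"
        by (simp add: m2_def space_M)
      thus ?thesis using m2 by (simp add: field_simps)
    qed
    define q where "q = t1 / t2"
    have q0: "0 \<le> q" and q1: "q < 1" using t1 t12r by (auto simp: q_def field_simps)
    define \<mu>T where "\<mu>T = measure M (space M)"
    have "(\<lambda>N. (q\<^sup>2) ^ (Suc N) * (B\<^sup>2 / m2 * \<mu>T)) \<longlonglongrightarrow> 0"
      using q0 q1 by (intro tendsto_mult_left_zero LIMSEQ_Suc LIMSEQ_power_zero) (simp add: power_less_one_iff abs_square_less_1)
    from order_tendstoD(2)[OF this dd]
    have evN: "eventually (\<lambda>N. (q\<^sup>2) ^ (Suc N) * (B\<^sup>2 / m2) * \<mu>T < \<delta>\<^sup>2) sequentially"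
      by (simp add: mult.assoc)
    show "eventually (\<lambda>N. dist (\<Sum>n\<le>N. a n *\<^sub>R u n) x < \<epsilon>) sequentially"
      using evN
    proof eventually_elim
      case (elim N)
      define head where "head k = (\<Sum>n\<le>N. (b k n - a n) *\<^sub>R u n)" for k
      have "head \<longlonglongrightarrow> (\<Sum>n\<le>N. (a n - a n) *\<^sub>R u n)"
        unfolding head_def by (intro tendsto_intros b_lim)
      hence "head \<longlonglongrightarrow> 0" by simp
      hence ev1: "eventually (\<lambda>k. norm (head k) < \<delta>) sequentially"
        using \<delta>0 by (simp add: tendsto_iff)
      have ev2: "eventually (\<lambda>k. norm (X k - x) < \<delta>) sequentially"
        using X_lim \<delta>0 by (simp add: tendsto_iff dist_norm)
      have "eventually (\<lambda>k. norm (head k) < \<delta> \<and> norm (X k - x) < \<delta> \<and> K0 \<le> k) sequentially"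
        using ev1 ev2 eventually_ge_at_top[of K0] by eventually_elim auto
      then obtain k where hk: "norm (head k) < \<delta>" "norm (X k - x) < \<delta>" "K0 \<le> k"
        unfolding eventually_sequentially by blast
      define L where "L = max N (NN k)"
      define T where "T = (\<Sum>n\<in>{N<..L}. b k n *\<^sub>R u n)"
      define tlp where "tlp t = (\<Sum>n\<in>{N<..L}. b k n * t ^ n)" for t
      have split: "(\<Sum>n\<le>N. a n *\<^sub>R u n) - x = (X k - x) - head k - T"
      proof -
        have "X k = (\<Sum>n\<le>N. b k n *\<^sub>R u n) + T"
          unfolding T_def using X_L[of k L] sum_split_ivl[of N L] by (simp add: L_def)
        thus ?thesis by (simp add: head_def sum_subtractf scaleR_left_diff_distrib)
      qed
      have tl_sub: "tlp t \<le> p k t" if "0 \<le> t" for t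
      proof -
        have "tlp t \<le> (\<Sum>n\<le>L. b k n * t ^ n)"
          unfolding tlp_def using that by (intro sum_mono2) (auto simp: b_nn)
        thus ?thesis using p_L[of k L t] by (simp add: L_def)
      qed
      have tl_nn: "0 \<le> tlp t" if "0 \<le> t" for t
        unfolding tlp_def by (intro sum_nonneg) (simp add: b_nn that)
      have tl_small: "tlp t \<le> q ^ Suc N * p k t2" if "0 \<le> t" "t \<le> t1" for t
      proof -
        have "tlp t \<le> (\<Sum>n\<in>{N<..L}. q ^ Suc N * (b k n * t2 ^ n))"
          unfolding tlp_def
        proof (rule sum_mono)
          fix n assume n: "n \<in> {N<..L}"
          have qt: "q * t2 = t1" using t12r t1 by (simp add: q_def)
          have h1: "t ^ n \<le> t1 ^ n" using that by (intro power_mono) auto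
          have h2: "t1 ^ n = q ^ n * t2 ^ n" unfolding qt[symmetric] by (rule power_mult_distrib)
          have h3: "q ^ n \<le> q ^ Suc N" using n q0 q1 by (intro power_decreasing) auto
          have h4: "q ^ n * t2 ^ n \<le> q ^ Suc N * t2 ^ n" using h3 t1 t12r by (intro mult_right_mono) auto
          have h: "t ^ n \<le> q ^ Suc N * t2 ^ n" using h1 h2 h4 by linarith
          from mult_left_mono[OF h b_nn[of k n]]
          show "b k n * t ^ n \<le> q ^ Suc N * (b k n * t2 ^ n)" by (simp add: mult.left_commute)
        qed
        also have "\<dots> = q ^ Suc N * tlp t2" by (simp only: tlp_def sum_distrib_left)
        also have "\<dots> \<le> q ^ Suc N * p k t2" using t1 t12r q0 by (intro mult_left_mono tl_sub) auto
        finally show ?thesis .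
      qed
      have tl_int: "integral\<^sup>L M (\<lambda>t. (tlp t)\<^sup>2) \<le> 5 * \<delta>\<^sup>2"
      proof -
        have i1: "integrable M (\<lambda>t. (q\<^sup>2) ^ (Suc N) * (B\<^sup>2 / m2))"
          by (rule finite_measure.integrable_const[OF fin])
        have i2: "integrable M (\<lambda>t. 2 * ((p K0 t)\<^sup>2 * indicator {t1<..} t))"
          using p_int by (intro integrable_mult_right integrable_real_mult_indicator) (auto simp: sets_M_iff)
        have i3: "integrable M (\<lambda>t. 2 * (p k t - p K0 t)\<^sup>2)"
          using pdiff_int by (intro integrable_mult_right)
        have "integral\<^sup>L M (\<lambda>t. (tlp t)\<^sup>2) \<le> integral\<^sup>L M (\<lambda>t. (q\<^sup>2) ^ (Suc N) * (B\<^sup>2 / m2)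
             + (2 * ((p K0 t)\<^sup>2 * indicator {t1<..} t) + 2 * (p k t - p K0 t)\<^sup>2))"
        proof (rule integral_mono_AE)
          show "integrable M (\<lambda>t. (tlp t)\<^sup>2)" unfolding tlp_def by (rule int_sq)
          show "integrable M (\<lambda>t. (q\<^sup>2) ^ (Suc N) * (B\<^sup>2 / m2)
             + (2 * ((p K0 t)\<^sup>2 * indicator {t1<..} t) + 2 * (p k t - p K0 t)\<^sup>2))"
            by (intro Bochner_Integration.integrable_add i1 i2 i3)
          show "AE t in M. (tlp t)\<^sup>2 \<le> (q\<^sup>2) ^ (Suc N) * (B\<^sup>2 / m2)
             + (2 * ((p K0 t)\<^sup>2 * indicator {t1<..} t) + 2 * (p k t - p K0 t)\<^sup>2)"
            using AE_good
          proof eventually_elim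
            case (elim t)
            hence t0: "0 \<le> t" by simp
            have c0: "0 \<le> (q\<^sup>2) ^ (Suc N) * (B\<^sup>2 / m2)" using m2 by simp
            show ?case
            proof (cases "t \<le> t1")
              case True
              have "(tlp t)\<^sup>2 \<le> (q ^ Suc N * p k t2)\<^sup>2"
                using tl_small[OF t0 True] tl_nn[OF t0] by (intro power_mono) auto
              also have "\<dots> = (q\<^sup>2) ^ (Suc N) * (p k t2)\<^sup>2"
                by (simp only: power_mult_distrib power_mult[symmetric] mult.commute)
              also have "\<dots> \<le> (q\<^sup>2) ^ (Suc N) * (B\<^sup>2 / m2)"
                by (intro mult_left_mono pt2) simp
              finally have h: "(tlp t)\<^sup>2 \<le> (q\<^sup>2) ^ (Suc N) * (B\<^sup>2 / m2)" .
              have aux: "0 \<le> 2 * (p k t - p K0 t)\<^sup>2" by simp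
              have ind0: "indicator {t1<..} t = (0::real)" using True by simp
              show ?thesis unfolding ind0 mult_zero_right add_0_left using h aux by linarith
            next
              case False
              have "(tlp t)\<^sup>2 \<le> (p k t)\<^sup>2"
                using tl_sub[OF t0] tl_nn[OF t0] by (intro power_mono) auto
              also have "\<dots> \<le> 2 * (p K0 t)\<^sup>2 + 2 * (p k t - p K0 t)\<^sup>2"
                using sum_squares_ge_zero[of "p k t - 2 * p K0 t" 0]
                by (simp add: power2_eq_square algebra_simps)
              finally show ?thesis using False c0 by simp
            qed
          qed
        qed
        also have "\<dots> = (q\<^sup>2) ^ (Suc N) * (B\<^sup>2 / m2) * \<mu>T
             + (2 * integral\<^sup>L M (\<lambda>t. (p K0 t)\<^sup>2 * indicator {t1<..} t) + 2 * integral\<^sup>L M (\<lambda>t. (p k t - p K0 t)\<^sup>2))"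
        proof -
          show ?thesis
          proof -
            have e1: "integral\<^sup>L M (\<lambda>t. (q\<^sup>2) ^ (Suc N) * (B\<^sup>2 / m2)
               + (2 * ((p K0 t)\<^sup>2 * indicator {t1<..} t) + 2 * (p k t - p K0 t)\<^sup>2))
              = integral\<^sup>L M (\<lambda>t. (q\<^sup>2) ^ (Suc N) * (B\<^sup>2 / m2))
               + integral\<^sup>L M (\<lambda>t. 2 * ((p K0 t)\<^sup>2 * indicator {t1<..} t) + 2 * (p k t - p K0 t)\<^sup>2)"
              by (rule Bochner_Integration.integral_add[OF i1 Bochner_Integration.integrable_add[OF i2 i3]])
            have e2: "integral\<^sup>L M (\<lambda>t. 2 * ((p K0 t)\<^sup>2 * indicator {t1<..} t) + 2 * (p k t - p K0 t)\<^sup>2)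
              = integral\<^sup>L M (\<lambda>t. 2 * ((p K0 t)\<^sup>2 * indicator {t1<..} t)) + integral\<^sup>L M (\<lambda>t. 2 * (p k t - p K0 t)\<^sup>2)"
              by (rule Bochner_Integration.integral_add[OF i2 i3])
            have e3: "integral\<^sup>L M (\<lambda>t. (q\<^sup>2) ^ (Suc N) * (B\<^sup>2 / m2)) = (q\<^sup>2) ^ (Suc N) * (B\<^sup>2 / m2) * \<mu>T"
              unfolding lebesgue_integral_const \<mu>T_def by simp
            have e4: "integral\<^sup>L M (\<lambda>t. 2 * ((p K0 t)\<^sup>2 * indicator {t1<..} t)) = 2 * integral\<^sup>L M (\<lambda>t. (p K0 t)\<^sup>2 * indicator {t1<..} t)"
              by (rule integral_mult_right_zero)
            have e5: "integral\<^sup>L M (\<lambda>t. 2 * (p k t - p K0 t)\<^sup>2) = 2 * integral\<^sup>L M (\<lambda>t. (p k t - p K0 t)\<^sup>2)"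
              by (rule integral_mult_right_zero)
            show ?thesis by (simp only: e1 e2 e3 e4 e5)
          qed
        qed
        also have "\<dots> \<le> \<delta>\<^sup>2 + (2 * \<delta>\<^sup>2 + 2 * \<delta>\<^sup>2)"
        proof -
          have "integral\<^sup>L M (\<lambda>t. (p k t - p K0 t)\<^sup>2) \<le> (norm (X k - X K0))\<^sup>2" by (rule pdiff)
          also have "\<dots> \<le> \<delta>\<^sup>2" using K0[OF hk(3) order_refl] by (intro power_mono) (auto simp: dist_norm)
          finally show ?thesis using elim t1i by linarith
        qed
        finally show ?thesis by simp
      qed
      have "(norm T)\<^sup>2 \<le> (1 + C\<^sup>2) * integral\<^sup>L M (\<lambda>t. (tlp t)\<^sup>2)"
        unfolding T_def tlp_def by (rule norm_upper) (auto simp: b_nn)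
      also have "\<dots> \<le> (1 + C\<^sup>2) * (5 * \<delta>\<^sup>2)"
        by (intro mult_left_mono tl_int) (simp add: add_nonneg_nonneg)
      also have "\<dots> = (D * \<delta>)\<^sup>2"
      proof -
        have c0: "0 \<le> 5 * (1 + C\<^sup>2)" by (intro mult_nonneg_nonneg add_nonneg_nonneg) simp_all
        have D2: "D\<^sup>2 = 5 * (1 + C\<^sup>2)" unfolding D_def by (rule real_sqrt_pow2[OF c0])
        show ?thesis unfolding power_mult_distrib D2 by (simp only: mult_ac)
      qed
      finally have nT2: "(norm T)\<^sup>2 \<le> (D * \<delta>)\<^sup>2" .
      have nT: "norm T \<le> D * \<delta>"
        by (rule power2_le_imp_le[OF nT2]) (use D0 \<delta>0 in simp)
      have "dist (\<Sum>n\<le>N. a n *\<^sub>R u n) x \<le> norm (X k - x) + norm (head k) + norm T"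
      proof -
        have "norm ((X k - x) - head k - T) \<le> norm ((X k - x) - head k) + norm T" by (rule norm_triangle_ineq4)
        also have "norm ((X k - x) - head k) \<le> norm (X k - x) + norm (head k)" by (rule norm_triangle_ineq4)
        finally show ?thesis unfolding dist_norm split by simp
      qed
      also have "\<dots> < \<delta> + \<delta> + D * \<delta>" using hk nT by linarith
      also have "\<dots> = (2 + D) * \<delta>" by (simp add: algebra_simps)
      finally show ?case using h\<epsilon> by linarith
    qed
  qed
qed

end


lemma diag_subseq:
  fixes b :: "nat \<Rightarrow> nat \<Rightarrow> real"
  assumes "\<And>k n. 0 \<le> b k n \<and> b k n \<le> Bn n"
  shows "\<exists>r a. strict_mono r \<and> (\<forall>n. (\<lambda>k. b (r k) n) \<longlonglongrightarrow> a n)"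
proof -
  define S where "S = PiE UNIV (\<lambda>n. {0..Bn n})"
  have "compactin (product_topology (\<lambda>n. euclidean) UNIV) S"
    unfolding S_def compactin_PiE by auto
  hence "compact S"
    by (simp add: euclidean_product_topology compactin_euclidean_iff)
  hence "seq_compact S" by (rule compact_imp_seq_compact)
  moreover have "\<forall>k. b k \<in> S" using assms by (auto simp: S_def)
  ultimately obtain l r where "l \<in> S" "strict_mono r" "(b \<circ> r) \<longlonglongrightarrow> l"
    unfolding seq_compact_def by metis
  have "(\<lambda>k. b (r k) n) \<longlonglongrightarrow> l n" for n
    using continuous_on_tendsto_compose[OF continuous_on_product_coordinates[of n] \<open>(b \<circ> r) \<longlonglongrightarrow> l\<close>]
    by (simp add: o_def)
  thus ?thesis using \<open>strict_mono r\<close> by blast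
qed

context cone_setting begin

lemma u_zero':
  assumes "integral\<^sup>L M (\<lambda>t. t ^ (n + n)) = 0"
  shows "u n = 0"
proof -
  have "(\<lambda>t::real. (t ^ n)\<^sup>2) = (\<lambda>t. t ^ (n + n))" by (simp add: power2_eq_square power_add)
  thus ?thesis using assms by (intro u_zero) simp
qed

lemma closure_sub: "closure (cone_gen u) \<subseteq> series_cone u"
proof
  fix x assume "x \<in> closure (cone_gen u)"
  then obtain X where Xin: "\<And>k. X k \<in> cone_gen u" and X_lim: "X \<longlonglongrightarrow> x"
    unfolding closure_sequential by blast
  show "x \<in> series_cone u"
  proof (cases "supp_sup M \<le> 0")
    case True
    hence u0: "\<And>n. u n = 0" by (rule degenerate)
    have "X k = 0" for k using Xin[of k] by (auto simp: cone_gen_def u0)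
    hence "X = (\<lambda>k. 0)" by (intro ext)
    hence "(\<lambda>k. 0) \<longlonglongrightarrow> x" using X_lim by simp
    hence "x = 0" by (simp add: LIMSEQ_const_iff)
    thus ?thesis unfolding series_cone_def by (intro CollectI exI[of _ "\<lambda>n. 0"]) (simp add: u0)
  next
    case False
    hence spos: "supp_sup M > 0" by simp
    have "\<forall>k. \<exists>N bb. (\<forall>n. 0 \<le> bb n) \<and> X k = (\<Sum>n\<le>N. bb n *\<^sub>R u n)"
      using Xin unfolding cone_gen_def by blast
    hence "\<exists>NN. \<forall>k. \<exists>bb. (\<forall>n. 0 \<le> bb n) \<and> X k = (\<Sum>n\<le>NN k. bb n *\<^sub>R u n)"
      by (rule choice)
    then obtain NN where "\<forall>k. \<exists>bb. (\<forall>n. 0 \<le> bb n) \<and> X k = (\<Sum>n\<le>NN k. bb n *\<^sub>R u n)" by blast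
    hence "\<exists>bb. \<forall>k. (\<forall>n. 0 \<le> bb k n) \<and> X k = (\<Sum>n\<le>NN k. bb k n *\<^sub>R u n)"
      by (rule choice)
    then obtain bb where bb: "\<And>k n. 0 \<le> bb k n" and Xbb: "\<And>k. X k = (\<Sum>n\<le>NN k. bb k n *\<^sub>R u n)"
      by blast
    define mom where "mom n = integral\<^sup>L M (\<lambda>t. t ^ (n + n))" for n
    have mom_nn: "mom n \<ge> 0" for n
    proof -
      have "(\<lambda>t::real. t ^ (n + n)) = (\<lambda>t. (t ^ n)\<^sup>2)" by (simp add: power2_eq_square power_add)
      thus ?thesis unfolding mom_def by simp
    qed
    define b where "b k n = (if n \<le> NN k \<and> mom n > 0 then bb k n else 0)" for k n
    have b_nn: "0 \<le> b k n" for k n by (simp add: b_def bb)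
    have b_out: "NN k < n \<Longrightarrow> b k n = 0" for k n by (simp add: b_def)
    have X_eq: "X k = (\<Sum>n\<le>NN k. b k n *\<^sub>R u n)" for k
      unfolding Xbb
    proof (rule sum.cong[OF refl])
      fix n assume "n \<in> {..NN k}"
      show "bb k n *\<^sub>R u n = b k n *\<^sub>R u n"
      proof (cases "mom n > 0")
        case False
        hence "mom n = 0" using mom_nn[of n] by simp
        hence "u n = 0" unfolding mom_def by (rule u_zero')
        thus ?thesis by simp
      qed (use \<open>n \<in> {..NN k}\<close> in \<open>simp add: b_def\<close>)
    qed
    have "Bseq X" using X_lim by (intro convergent_imp_Bseq convergentI)
    then obtain B where B0: "B > 0" and B: "\<And>k. norm (X k) \<le> B" by (auto elim: BseqE)
    define Bn where "Bn n = (if mom n > 0 then B / sqrt (mom n) else 0)" for n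
    have b_le: "b k n \<le> Bn n" for k n
    proof (cases "n \<le> NN k \<and> mom n > 0")
      case False thus ?thesis using B0 by (simp add: b_def Bn_def)
    next
      case True
      have "integral\<^sup>L M (\<lambda>t. (\<Sum>m\<in>{n}. b k m * t ^ m)\<^sup>2) \<le> integral\<^sup>L M (\<lambda>t. (\<Sum>m\<le>NN k. b k m * t ^ m)\<^sup>2)"
      proof (rule integral_mono_AE[OF int_sq int_sq])
        show "AE t in M. (\<Sum>m\<in>{n}. b k m * t ^ m)\<^sup>2 \<le> (\<Sum>m\<le>NN k. b k m * t ^ m)\<^sup>2"
          using AE_good
        proof eventually_elim
          case (elim t)
          have "(\<Sum>m\<in>{n}. b k m * t ^ m) \<le> (\<Sum>m\<le>NN k. b k m * t ^ m)"
            using True elim by (intro sum_mono2) (auto simp: b_nn)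
          moreover have "0 \<le> (\<Sum>m\<in>{n}. b k m * t ^ m)" using elim b_nn[of k n] by simp
          ultimately show ?case by (intro power_mono)
        qed
      qed
      also have "\<dots> \<le> (norm (X k))\<^sup>2" unfolding X_eq by (rule norm_lower) simp
      also have "\<dots> \<le> B\<^sup>2" using B[of k] by (intro power_mono) auto
      finally have h: "integral\<^sup>L M (\<lambda>t. (\<Sum>m\<in>{n}. b k m * t ^ m)\<^sup>2) \<le> B\<^sup>2" .
      have "integral\<^sup>L M (\<lambda>t. (\<Sum>m\<in>{n}. b k m * t ^ m)\<^sup>2) = (b k n)\<^sup>2 * mom n"
        using integral_sq[of "{n}" "b k"] by (simp add: mom_def power2_eq_square)
      with h have "(b k n)\<^sup>2 * mom n \<le> B\<^sup>2" by simp
      hence "(b k n)\<^sup>2 \<le> B\<^sup>2 / mom n" using True by (simp add: field_simps)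
      hence "b k n \<le> sqrt (B\<^sup>2 / mom n)" by (rule real_le_rsqrt)
      thus ?thesis using True B0 by (simp add: Bn_def real_sqrt_divide)
    qed
    obtain r a where r: "strict_mono r" and ab: "\<And>n. (\<lambda>k. b (r k) n) \<longlonglongrightarrow> a n"
      using diag_subseq[of b Bn] b_nn b_le by blast
    have lim: "(\<lambda>N. \<Sum>n\<le>N. a n *\<^sub>R u n) \<longlonglongrightarrow> x"
    proof (rule core[where b="\<lambda>k n. b (r k) n" and NN="\<lambda>k. NN (r k)" and X="X \<circ> r"])
      show "(X \<circ> r) \<longlonglongrightarrow> x" by (rule LIMSEQ_subseq_LIMSEQ[OF X_lim r])
    qed (auto simp: spos b_nn b_out X_eq ab)
    have a_nn: "a n \<ge> 0" for n by (rule LIMSEQ_le_const[OF ab]) (simp add: b_nn)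
    show ?thesis unfolding series_cone_def using a_nn lim by blast
  qed
qed

lemma sub_closure: "series_cone u \<subseteq> closure (cone_gen u)"
proof
  fix x assume "x \<in> series_cone u"
  then obtain a where a: "\<forall>n. a n \<ge> 0" and lim: "(\<lambda>N. \<Sum>n\<le>N. a n *\<^sub>R u n) \<longlonglongrightarrow> x"
    unfolding series_cone_def by blast
  have "\<forall>N. (\<Sum>n\<le>N. a n *\<^sub>R u n) \<in> cone_gen u" using a unfolding cone_gen_def by blast
  thus "x \<in> closure (cone_gen u)" unfolding closure_sequential using lim
    by (intro exI[of _ "\<lambda>N. \<Sum>n\<le>N. a n *\<^sub>R u n"]) blast
qed

lemma closure_eq: "closure (cone_gen u) = series_cone u"
  using closure_sub sub_closure by blast

end


lemma series_cone_convex: "convex (series_cone V)"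
  unfolding convex_def
proof (intro ballI allI impI)
  fix x y and s t :: real assume "x \<in> series_cone V" "y \<in> series_cone V" "0 \<le> s" "0 \<le> t" "s + t = 1"
  then obtain a b where a: "\<forall>n. a n \<ge> 0" "(\<lambda>N. \<Sum>n\<le>N. a n *\<^sub>R V n) \<longlonglongrightarrow> x"
    and b: "\<forall>n. b n \<ge> 0" "(\<lambda>N. \<Sum>n\<le>N. b n *\<^sub>R V n) \<longlonglongrightarrow> y"
    unfolding series_cone_def by blast
  have eq: "(\<Sum>n\<le>N. (s * a n + t * b n) *\<^sub>R V n) = s *\<^sub>R (\<Sum>n\<le>N. a n *\<^sub>R V n) + t *\<^sub>R (\<Sum>n\<le>N. b n *\<^sub>R V n)" for N
    by (simp add: scaleR_add_left sum.distrib scaleR_sum_right)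
  have "(\<lambda>N. \<Sum>n\<le>N. (s * a n + t * b n) *\<^sub>R V n) \<longlonglongrightarrow> s *\<^sub>R x + t *\<^sub>R y"
    unfolding eq by (rule tendsto_add[OF tendsto_scaleR[OF tendsto_const a(2)] tendsto_scaleR[OF tendsto_const b(2)]])
  moreover have "\<forall>n. s * a n + t * b n \<ge> 0" using a b \<open>0 \<le> s\<close> \<open>0 \<le> t\<close> by simp
  ultimately show "s *\<^sub>R x + t *\<^sub>R y \<in> series_cone V" unfolding series_cone_def
    by (intro CollectI exI[of _ "\<lambda>n. s * a n + t * b n"]) simp
qed

lemma series_cone_cone: "cone (series_cone V)"
  unfolding cone_def
proof (intro ballI allI impI)
  fix x and c :: real assume "x \<in> series_cone V" "0 \<le> c"
  then obtain a where a: "\<forall>n. a n \<ge> 0" "(\<lambda>N. \<Sum>n\<le>N. a n *\<^sub>R V n) \<longlonglongrightarrow> x"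
    unfolding series_cone_def by blast
  have eq: "(\<Sum>n\<le>N. (c * a n) *\<^sub>R V n) = c *\<^sub>R (\<Sum>n\<le>N. a n *\<^sub>R V n)" for N
    by (simp add: scaleR_sum_right)
  have "(\<lambda>N. \<Sum>n\<le>N. (c * a n) *\<^sub>R V n) \<longlonglongrightarrow> c *\<^sub>R x"
    unfolding eq by (rule tendsto_scaleR[OF tendsto_const a(2)])
  moreover have "\<forall>n. c * a n \<ge> 0" using a \<open>0 \<le> c\<close> by simp
  ultimately show "c *\<^sub>R x \<in> series_cone V" unfolding series_cone_def
    by (intro CollectI exI[of _ "\<lambda>n. c * a n"]) simp
qed

lemma rescale_sets:
  fixes v :: "nat \<Rightarrow> 'h::real_normed_vector" and lam :: "nat \<Rightarrow> real"
  assumes lam_pos: "\<And>n. lam n > 0"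
  shows "cone_gen (\<lambda>n. lam n *\<^sub>R v n) = cone_gen v"
    and "series_cone (\<lambda>n. lam n *\<^sub>R v n) = series_cone v"
proof -
  have e1: "(\<Sum>n\<le>N. a n *\<^sub>R v n) = (\<Sum>n\<le>N. (a n / lam n) *\<^sub>R (lam n *\<^sub>R v n))" for N a
    using lam_pos by (intro sum.cong refl) (simp add: less_imp_neq[symmetric])
  have e2: "(\<Sum>n\<le>N. a n *\<^sub>R (lam n *\<^sub>R v n)) = (\<Sum>n\<le>N. (a n * lam n) *\<^sub>R v n)" for N a
    by simp
  have p1: "\<forall>n. 0 \<le> a n \<Longrightarrow> \<forall>n. 0 \<le> a n / lam n" for a
    by (blast intro: divide_nonneg_pos lam_pos)
  have p2: "\<forall>n. 0 \<le> a n \<Longrightarrow> \<forall>n. 0 \<le> a n * lam n" for a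
    by (blast intro: mult_nonneg_nonneg less_imp_le[OF lam_pos])
  show "cone_gen (\<lambda>n. lam n *\<^sub>R v n) = cone_gen v"
    unfolding cone_gen_def
  proof (intro equalityI subsetI; elim CollectE exE conjE)
    fix x N a assume "x = (\<Sum>n\<le>N. a n *\<^sub>R (lam n *\<^sub>R v n))" "\<forall>n. 0 \<le> a n"
    thus "x \<in> {\<Sum>n\<le>N. a n *\<^sub>R v n |N a. \<forall>n. 0 \<le> a n}"
      using p2[of a] unfolding e2 by (intro CollectI exI[of _ N] exI[of _ "\<lambda>n. a n * lam n"]) simp
  next
    fix x N a assume "x = (\<Sum>n\<le>N. a n *\<^sub>R v n)" "\<forall>n. 0 \<le> a n"
    thus "x \<in> {\<Sum>n\<le>N. a n *\<^sub>R (lam n *\<^sub>R v n) |N a. \<forall>n. 0 \<le> a n}"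
      using p1[of a] unfolding e1 by (intro CollectI exI[of _ N] exI[of _ "\<lambda>n. a n / lam n"]) simp
  qed
  show "series_cone (\<lambda>n. lam n *\<^sub>R v n) = series_cone v"
    unfolding series_cone_def
  proof (intro equalityI subsetI; elim CollectE exE conjE)
    fix x a assume "\<forall>n. 0 \<le> a n" "(\<lambda>N. \<Sum>n\<le>N. a n *\<^sub>R (lam n *\<^sub>R v n)) \<longlonglongrightarrow> x"
    thus "x \<in> {x. \<exists>a. (\<forall>n. 0 \<le> a n) \<and> (\<lambda>N. \<Sum>n\<le>N. a n *\<^sub>R v n) \<longlonglongrightarrow> x}"
      using p2[of a] unfolding e2 by (intro CollectI exI[of _ "\<lambda>n. a n * lam n"]) simp
  next
    fix x a assume "\<forall>n. 0 \<le> a n" "(\<lambda>N. \<Sum>n\<le>N. a n *\<^sub>R v n) \<longlonglongrightarrow> x"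
    thus "x \<in> {x. \<exists>a. (\<forall>n. 0 \<le> a n) \<and> (\<lambda>N. \<Sum>n\<le>N. a n *\<^sub>R (lam n *\<^sub>R v n)) \<longlonglongrightarrow> x}"
      using p1[of a] unfolding e1 by (intro CollectI exI[of _ "\<lambda>n. a n / lam n"]) simp
  qed
qed

theorem theorem1p1:
  fixes M :: "real measure"
    and w :: "nat \<Rightarrow> 'k::{real_inner, complete_space}"
    and v :: "nat \<Rightarrow> 'h::{real_inner, complete_space}"
    and lam :: "nat \<Rightarrow> real"
    and C :: real
  assumes sets_M: "sets M = sets borel"
    and nonneg_supp: "emeasure M {..<0} = 0"
    and moments: "\<And>n. integrable M (\<lambda>t. t ^ n)"
    and supp_cond: "emeasure M ({0..} - {x. ereal x < supp_sup M}) = 0"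
    and C_pos: "C > 0"
    and bound: "\<And>N (a :: nat \<Rightarrow> real). (\<forall>n. a n \<ge> 0) \<Longrightarrow>
        norm (\<Sum>n\<le>N. a n *\<^sub>R w n)
          \<le> C * sqrt (integral\<^sup>L M (\<lambda>t. (\<Sum>n\<le>N. a n * t ^ n)\<^sup>2))"
    and lam_pos: "\<And>n. lam n > 0"
    and gram: "\<And>n m. (lam n *\<^sub>R v n) \<bullet> (lam m *\<^sub>R v m)
                 = integral\<^sup>L M (\<lambda>t. t ^ (m + n)) + w n \<bullet> w m"
  shows "closure (cone_gen v) = series_cone v
         \<and> closed (series_cone v) \<and> convex (series_cone v) \<and> cone (series_cone v)"
proof -
  interpret cone_setting M w "\<lambda>n. lam n *\<^sub>R v n" C
    using sets_M nonneg_supp moments supp_cond C_pos bound gram by unfold_locales auto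
  have eq: "closure (cone_gen v) = series_cone v"
    using closure_eq unfolding rescale_sets[OF lam_pos] .
  have cl: "closed (series_cone v)" using closed_closure[of "cone_gen v"] unfolding eq .
  show ?thesis using eq cl series_cone_convex[of v] series_cone_cone[of v] by blast
qed


end
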